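(* Let $G=(V,E)$ be an undirected graph, $X\subset V$, $Y=V\setminus X$, $f\in L^\infty(X)$, $g\in L^\infty(Y)$, and let $u:V\to\mathbb{R}$ satisfy $\Delta_\infty u(x)=f(x)$ for all $x\in X$ and $u=g$ on $Y$. Let $x\in X$ and $y\sim x$. Then for every positive integer $N$ with $N\le d(Y,x)$, \[ u(y)-u(x)\ \le\ \frac{u(x)-\inf_V u}{N}+\frac{(N+1)\sup_X f}{2}. \]
   Context: For $x,y\in V$ write $x\sim y$ if $\{x,y\}\in E$; $d(Y,x)$ is the combinatorial distance, i.e. the least length $n$ of a path $Y\ni x_0\sim\cdots\sim x_n=x$. The discrete infinity Laplacian is $\Delta_\infty u(x)=\inf_{z\sim x}u(z)+\sup_{z\sim x}u(z)-2u(x)$. *)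

theory Defs
  imports "HOL-Analysis.Analysis" "HOL-Library.Extended_Nat" "HOL-Library.Extended_Real"
begin

definition ugraph :: "'a set \<Rightarrow> 'a set set \<Rightarrow> bool" where
  "ugraph V E \<longleftrightarrow> (\<forall>e\<in>E. \<exists>a b. a \<noteq> b \<and> a \<in> V \<and> b \<in> V \<and> e = {a, b})"

definition adj :: "'a set set \<Rightarrow> 'a \<Rightarrow> 'a \<Rightarrow> bool" where
  "adj E x y \<longleftrightarrow> {x, y} \<in> E"

definition nbrs :: "'a set \<Rightarrow> 'a set set \<Rightarrow> 'a \<Rightarrow> 'a set" where
  "nbrs V E x = {z \<in> V. adj E x z}"

definition walk :: "'a set set \<Rightarrow> 'a list \<Rightarrow> bool" where
  "walk E xs \<longleftrightarrow> xs \<noteq> [] \<and> (\<forall>i. Suc i < length xs \<longrightarrow> adj E (xs ! i) (xs ! Suc i))"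

text \<open>Combinatorial distance d(Y,x) (infinite if no such path exists).\<close>
definition gdist :: "'a set set \<Rightarrow> 'a set \<Rightarrow> 'a \<Rightarrow> enat" where
  "gdist E Y x = (INF xs \<in> {xs. walk E xs \<and> hd xs \<in> Y \<and> last xs = x}. enat (length xs - 1))"

definition inf_lap :: "'a set \<Rightarrow> 'a set set \<Rightarrow> ('a \<Rightarrow> real) \<Rightarrow> 'a \<Rightarrow> real" where
  "inf_lap V E u x = (INF z \<in> nbrs V E x. u z) + (SUP z \<in> nbrs V E x. u z) - 2 * u x"

text \<open>"Delta_infty u(x) = c" with the inf and sup being (finite) real numbers.\<close>
definition inf_lap_eq :: "'a set \<Rightarrow> 'a set set \<Rightarrow> ('a \<Rightarrow> real) \<Rightarrow> 'a \<Rightarrow> real \<Rightarrow> bool" where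
  "inf_lap_eq V E u x c \<longleftrightarrow> nbrs V E x \<noteq> {} \<and> bdd_below (u ` nbrs V E x) \<and>
      bdd_above (u ` nbrs V E x) \<and> inf_lap V E u x = c"

end

theory Submission
  imports Defs
begin

lemma adj_sym: "adj E a b \<Longrightarrow> adj E b a"
  unfolding adj_def by (simp add: insert_commute)

lemma step_lemma:
  assumes "inf_lap_eq V E u z (f z)" "f z \<le> M" "w \<in> V" "adj E z w" "0 < (e::real)"
  shows "\<exists>w'\<in>V. adj E z w' \<and> u z - u w' \<ge> u w - u z - M - e"
proof -
  have ne: "nbrs V E z \<noteq> {}" and bb: "bdd_below (u ` nbrs V E z)"
    and ba: "bdd_above (u ` nbrs V E z)"
    and eq: "(INF t \<in> nbrs V E z. u t) + (SUP t \<in> nbrs V E z. u t) - 2 * u z = f z"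
    using assms(1) unfolding inf_lap_eq_def inf_lap_def by auto
  have wn: "w \<in> nbrs V E z" using assms(3,4) unfolding nbrs_def by auto
  have "u w \<le> (SUP t \<in> nbrs V E z. u t)" using cSUP_upper[OF wn ba] .
  moreover have "(INF t \<in> nbrs V E z. u t) < (INF t \<in> nbrs V E z. u t) + e" using assms(5) by simp
  then obtain w' where w': "w' \<in> nbrs V E z" "u w' < (INF t \<in> nbrs V E z. u t) + e"
    using cINF_less_iff[OF ne bb] by blast
  ultimately show ?thesis using eq assms(2) w'(1) w'(2) unfolding nbrs_def
    by (intro bexI[of _ w']) auto
qed

lemma gauss_real: "(\<Sum>i<N. real (i+1)) = real N * (real N + 1) / 2"
  by (induction N) (auto simp: field_simps)

lemma inX:
  assumes "\<forall>i<k. adj E (p i) (p (Suc i))" "p 0 = x" "p k \<in> V" "Y = V - X"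
    "enat N \<le> gdist E Y x" "k < N"
  shows "p k \<in> X"
proof (rule ccontr)
  assume "p k \<notin> X"
  hence pY: "p k \<in> Y" using assms(3,4) by auto
  define xs where "xs = map (\<lambda>i. p (k - i)) [0..<Suc k]"
  have w: "walk E xs" unfolding walk_def
  proof (intro conjI allI impI)
    show "xs \<noteq> []" unfolding xs_def by simp
    fix i assume i: "Suc i < length xs"
    hence ik: "i < k" unfolding xs_def by simp
    have "adj E (p (k - Suc i)) (p (Suc (k - Suc i)))" using assms(1) ik by simp
    moreover have "Suc (k - Suc i) = k - i" using ik by simp
    ultimately have "adj E (p (k - i)) (p (k - Suc i))" using adj_sym by metis
    moreover have "xs ! i = p (k - i)" "xs ! Suc i = p (k - Suc i)"
      using ik unfolding xs_def by (simp_all del: upt_Suc add: nth_map_upt)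
    ultimately show "adj E (xs ! i) (xs ! Suc i)" by simp
  qed
  have h: "hd xs = p k" unfolding xs_def by (simp del: upt_Suc add: hd_map upt_conv_Cons)
  have l: "last xs = x" unfolding xs_def using assms(2) by (simp add: last_map)
  have len: "length xs - 1 = k" unfolding xs_def by simp
  have "gdist E Y x \<le> enat (length xs - 1)" unfolding gdist_def
    by (rule INF_lower) (use w h l pY in auto)
  hence "enat N \<le> enat k" using assms(5) len by (metis order_trans)
  thus False using assms(6) by simp
qed

lemma path_exists:
  assumes "X \<subseteq> V" "Y = V - X" "\<forall>z\<in>X. inf_lap_eq V E u z (f z)" "\<forall>z\<in>X. f z \<le> M"
    "x \<in> X" "y \<in> V" "adj E x y" "enat N \<le> gdist E Y x" "0 < (e::real)"
  shows "k \<le> N \<Longrightarrow> \<exists>p w. p 0 = x \<and> (\<forall>i\<le>k. p i \<in> V) \<and> (\<forall>i<k. adj E (p i) (p (Suc i)))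
     \<and> (\<forall>i<k. u (p i) - u (p (Suc i)) \<ge> (u y - u x) - real (i+1) * (M + e))
     \<and> w \<in> V \<and> adj E (p k) w \<and> u w - u (p k) \<ge> (u y - u x) - real k * (M + e)"
proof (induction k)
  case 0
  show ?case
    by (rule exI[of _ "\<lambda>_. x"], rule exI[of _ y]) (use assms in auto)
next
  case (Suc k)
  then obtain p w where p: "p 0 = x" "\<forall>i\<le>k. p i \<in> V" "\<forall>i<k. adj E (p i) (p (Suc i))"
     "\<forall>i<k. u (p i) - u (p (Suc i)) \<ge> (u y - u x) - real (i+1) * (M + e)"
     "w \<in> V" "adj E (p k) w" "u w - u (p k) \<ge> (u y - u x) - real k * (M + e)" by auto
  have pkX: "p k \<in> X" using inX[OF p(3) p(1) _ assms(2) assms(8)] p(2) Suc.prems by auto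
  obtain w' where w': "w' \<in> V" "adj E (p k) w'" "u (p k) - u w' \<ge> u w - u (p k) - M - e"
    using step_lemma[OF _ _ p(5) p(6) assms(9)] assms(3,4) pkX by blast
  define p' where "p' = p(Suc k := w')"
  have "p' 0 = x" using p(1) unfolding p'_def by simp
  moreover have "\<forall>i\<le>Suc k. p' i \<in> V" using p(2) w'(1) unfolding p'_def by (auto simp: le_Suc_eq)
  moreover have "\<forall>i<Suc k. adj E (p' i) (p' (Suc i))" using p(3) w'(2) unfolding p'_def
    by (auto simp: less_Suc_eq)
  moreover have "\<forall>i<Suc k. u (p' i) - u (p' (Suc i)) \<ge> (u y - u x) - real (i+1) * (M + e)"
    using p(4) w'(3) p(7) unfolding p'_def by (auto simp: less_Suc_eq algebra_simps)
  moreover have "p k \<in> V" "adj E (p' (Suc k)) (p k)" using p(2) w'(2) adj_sym unfolding p'_def by auto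
  moreover have "u (p k) - u (p' (Suc k)) \<ge> (u y - u x) - real (Suc k) * (M + e)"
    using w'(3) p(7) unfolding p'_def by (auto simp: algebra_simps)
  ultimately show ?case by blast
qed

lemma real_bound:
  assumes "X \<subseteq> V" "Y = V - X" "\<forall>z\<in>X. inf_lap_eq V E u z (f z)" "\<forall>z\<in>X. f z \<le> M"
    "x \<in> X" "y \<in> V" "adj E x y" "enat N \<le> gdist E Y x" "0 < N" "\<forall>v\<in>V. m \<le> u v"
  shows "u y - u x \<le> (u x - m) / real N + (real N + 1) * M / 2"
proof (rule field_le_epsilon)
  fix e0 :: real assume e0: "0 < e0"
  define e where "e = 2 * e0 / (real N + 1)"
  have e: "0 < e" using e0 unfolding e_def by simp
  obtain p w where p: "p 0 = x" "\<forall>i\<le>N. p i \<in> V"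
     "\<forall>i<N. u (p i) - u (p (Suc i)) \<ge> (u y - u x) - real (i+1) * (M + e)"
    using path_exists[OF assms(1-8) e, of N] by blast
  have "(\<Sum>i<N. (u y - u x) - real (i+1) * (M + e)) \<le> (\<Sum>i<N. u (p i) - u (p (Suc i)))"
    using p(3) by (intro sum_mono) auto
  also have "\<dots> = u x - u (p N)" using sum_lessThan_telescope'[of "\<lambda>i. u (p i)"] p(1) by simp
  also have "\<dots> \<le> u x - m" using assms(10) p(2) by auto
  finally have A: "real N * (u y - u x) - (\<Sum>i<N. real (i+1) * (M + e)) \<le> u x - m"
    by (simp add: sum_subtractf)
  have "(\<Sum>i<N. real (i+1) * (M + e)) = (\<Sum>i<N. real (i+1)) * (M + e)"
    by (rule sum_distrib_right[symmetric])
  with A have "real N * (u y - u x) - (M + e) * (real N * (real N + 1) / 2) \<le> u x - m"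
    by (simp only: gauss_real mult.commute)
  moreover have "(M + e) * (real N * (real N + 1) / 2) = real N * ((real N + 1) * M / 2 + e0)"
    unfolding e_def by (simp add: field_simps)
  moreover have "real N * ((u x - m) / real N) = u x - m" using assms(9) by simp
  ultimately have "real N * (u y - u x) \<le> real N * ((u x - m) / real N + (real N + 1) * M / 2 + e0)"
    unfolding distrib_left by linarith
  thus "u y - u x \<le> (u x - m) / real N + (real N + 1) * M / 2 + e0"
    using assms(9) by simp
qed

theorem lemma3p1:
  fixes V :: "'a set" and E :: "'a set set" and X Y :: "'a set"
    and f g u :: "'a \<Rightarrow> real" and x y :: 'a and N :: nat
  assumes "ugraph V E"
    and "X \<subseteq> V" and "Y = V - X"
    and "bounded (f ` X)" and "bounded (g ` Y)"
    and "\<forall>z\<in>X. inf_lap_eq V E u z (f z)"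
    and "\<forall>z\<in>Y. u z = g z"
    and "x \<in> X" and "y \<in> V" and "adj E x y"
    and "0 < N" and "enat N \<le> gdist E Y x"
  shows "ereal (u y - u x) \<le>
           (ereal (u x) - (INF v\<in>V. ereal (u v))) / ereal (real N)
           + ereal ((real N + 1) * (SUP z\<in>X. f z) / 2)"
proof -
  define M where "M = (SUP z\<in>X. f z)"
  have "bdd_above (f ` X)" using assms(4) by (rule bounded_imp_bdd_above)
  hence fM: "\<forall>z\<in>X. f z \<le> M" unfolding M_def by (auto intro: cSUP_upper)
  define I where "I = (INF v\<in>V. ereal (u v))"
  show ?thesis
  proof (cases "I = -\<infinity>")
    case True
    have "(ereal (u x) - I) / ereal (real N) = \<infinity>" using True assms(11) by simp
    thus ?thesis unfolding I_def[symmetric] by simp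
  next
    case False
    have "I \<le> ereal (u y)" unfolding I_def using assms(9) by (rule INF_lower)
    hence "I \<noteq> \<infinity>" by auto
    with False obtain m where m: "I = ereal m" by (cases I) auto
    have mle: "\<forall>v\<in>V. m \<le> u v"
    proof
      fix v assume "v \<in> V"
      hence "I \<le> ereal (u v)" unfolding I_def by (rule INF_lower)
      thus "m \<le> u v" using m by simp
    qed
    have "u y - u x \<le> (u x - m) / real N + (real N + 1) * M / 2"
      using real_bound[OF assms(2,3,6) fM assms(8,9,10,12,11) mle] .
    moreover have "(ereal (u x) - I) / ereal (real N) = ereal ((u x - m) / real N)"
      using m assms(11) by simp
    ultimately show ?thesis unfolding I_def[symmetric] M_def[symmetric] by simp
  qed
qed

end
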